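(* Define $c(2)=1$, $c(3)=2$, $c(4)=4$ and $c(n)=10-n$ for $n\ge 5$. For every $n\ge 2$ and every $\mathbf a\in\mathbb{R}^n$ with $N(\mathbf a)\ge 2$, $$Z(J_{n,2}J_{n,1}\mathbf a)\le \binom{n+1}{3}-nN(\mathbf a)+n+c(n).$$
   Context: For a real vector $\mathbf x$, $N(\mathbf x)$ and $Z(\mathbf x)$ denote the numbers of negative and zero components. For $d\ge 0$, $J_{n,d}$ is the matrix, with respect to the bases of degree-$d$ and degree-$(d+1)$ monomials in $x_1,\dots,x_n$ in left lexicographic order, of the linear map $A(x)\mapsto A(x)(x_1+\cdots+x_n)$. Thus $J_{n,2}J_{n,1}\mathbf a$ is the coefficient vector of $(a_1x_1+\cdots+a_nx_n)(x_1+\cdots+x_n)^2$. *)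

theory Defs
  imports Complex_Main
begin

text \<open>Coefficient vectors are functions on monomials; the ordering of the basis
  (left lexicographic) is irrelevant for counting zero components.\<close>

definition mons :: "nat \<Rightarrow> nat \<Rightarrow> (nat \<Rightarrow> nat) set" where
  "mons n d = {\<alpha>. (\<forall>i\<ge>n. \<alpha> i = 0) \<and> (\<Sum>i<n. \<alpha> i) = d}"

text \<open>Matrix J_{n,d}: entry (beta, alpha) is 1 iff beta = alpha + e_i for some i,
  i.e. the matrix of multiplication by (x_1 + ... + x_n).\<close>
definition Jmat :: "nat \<Rightarrow> nat \<Rightarrow> (nat \<Rightarrow> nat) \<Rightarrow> (nat \<Rightarrow> nat) \<Rightarrow> real" where
  "Jmat n d \<beta> \<alpha> =
     (if \<alpha> \<in> mons n d \<and> \<beta> \<in> mons n (Suc d) \<and> (\<exists>i<n. \<beta> = \<alpha>(i := Suc (\<alpha> i))) then 1 else 0)"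

definition Japply :: "nat \<Rightarrow> nat \<Rightarrow> ((nat \<Rightarrow> nat) \<Rightarrow> real) \<Rightarrow> ((nat \<Rightarrow> nat) \<Rightarrow> real)" where
  "Japply n d v = (\<lambda>\<beta>. \<Sum>\<alpha>\<in>mons n d. Jmat n d \<beta> \<alpha> * v \<alpha>)"

definition lin_vec :: "nat \<Rightarrow> (nat \<Rightarrow> real) \<Rightarrow> ((nat \<Rightarrow> nat) \<Rightarrow> real)" where
  "lin_vec n a = (\<lambda>\<alpha>. \<Sum>i<n. if \<alpha> = (\<lambda>j. if j = i then 1 else 0) then a i else 0)"

definition Nneg :: "nat \<Rightarrow> (nat \<Rightarrow> real) \<Rightarrow> nat" where
  "Nneg n a = card {i. i < n \<and> a i < 0}"

definition Zmon :: "nat \<Rightarrow> nat \<Rightarrow> ((nat \<Rightarrow> nat) \<Rightarrow> real) \<Rightarrow> nat" where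
  "Zmon n d v = card {\<beta> \<in> mons n d. v \<beta> = 0}"

definition cfun :: "nat \<Rightarrow> int" where
  "cfun n = (if n = 2 then 1 else if n = 3 then 2 else if n = 4 then 4 else 10 - int n)"

end

theory Submission
  imports Defs "HOL-Library.FuncSet" "HOL-Library.Multiset"
begin



lemma sum_upd_nat:
  fixes \<beta> :: "nat \<Rightarrow> nat"
  assumes "i < n"
  shows "(\<Sum>l<n. (\<beta>(i := x)) l) + \<beta> i = (\<Sum>l<n. \<beta> l) + x"
proof -
  have A: "(\<Sum>l<n. (\<beta>(i := x)) l) = x + (\<Sum>l\<in>{..<n}-{i}. \<beta> l)"
    using assms by (subst sum.remove[of _ i]) (auto intro!: sum.cong)
  have B: "(\<Sum>l<n. \<beta> l) = \<beta> i + (\<Sum>l\<in>{..<n}-{i}. \<beta> l)"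
    using assms by (subst sum.remove[of _ i]) auto
  show ?thesis using A B by simp
qed

lemma mons_dec:
  assumes "\<beta> \<in> mons n (Suc d)" "i < n" "\<beta> i > 0"
  shows "\<beta>(i := \<beta> i - 1) \<in> mons n d"
  using assms sum_upd_nat[of i n \<beta> "\<beta> i - 1"] unfolding mons_def by auto

lemma mons_inc:
  assumes "\<alpha> \<in> mons n d" "i < n"
  shows "\<alpha>(i := Suc (\<alpha> i)) \<in> mons n (Suc d)"
  using assms sum_upd_nat[of i n \<alpha> "Suc (\<alpha> i)"] unfolding mons_def by auto

lemma finite_mons: "finite (mons n d)"
proof -
  have "mons n d \<subseteq> (\<lambda>g i. if i < n then g i else 0) ` Pi\<^sub>E {..<n} (\<lambda>_. {..d})"
  proof
    fix \<alpha> assume a: "\<alpha> \<in> mons n d"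
    have le: "\<alpha> i \<le> d" if "i < n" for i
      using a that member_le_sum[of i "{..<n}" \<alpha>] unfolding mons_def by auto
    have "\<alpha> = (\<lambda>i. if i < n then (restrict \<alpha> {..<n}) i else 0)"
    proof
      fix i show "\<alpha> i = (if i < n then (restrict \<alpha> {..<n}) i else 0)"
        using a unfolding mons_def by simp
    qed
    moreover have "restrict \<alpha> {..<n} \<in> Pi\<^sub>E {..<n} (\<lambda>_. {..d})"
      using le by simp
    ultimately show "\<alpha> \<in> (\<lambda>g i. if i < n then g i else 0) ` Pi\<^sub>E {..<n} (\<lambda>_. {..d})"
      by blast
  qed
  thus ?thesis by (rule finite_subset) (simp add: finite_PiE)
qed

lemma ite_helper: "A \<Longrightarrow> B \<Longrightarrow> (if A \<and> B \<and> P then (1::real) else 0) * x = (if P then x else 0)"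
  by simp

lemma Japply_step:
  assumes "\<beta> \<in> mons n (Suc d)"
  shows "Japply n d v \<beta> = (\<Sum>i\<in>{i. i < n \<and> \<beta> i > 0}. v (\<beta>(i := \<beta> i - 1)))"
proof -
  let ?I = "{i. i < n \<and> \<beta> i > 0}"
  let ?g = "\<lambda>i. \<beta>(i := \<beta> i - 1)"
  let ?A = "{\<alpha> \<in> mons n d. \<exists>i<n. \<beta> = \<alpha>(i := Suc (\<alpha> i))}"
  have "Japply n d v \<beta> = (\<Sum>\<alpha>\<in>mons n d. if (\<exists>i<n. \<beta> = \<alpha>(i := Suc (\<alpha> i))) then v \<alpha> else 0)"
    unfolding Japply_def
  proof (rule sum.cong)
    fix \<alpha> assume "\<alpha> \<in> mons n d"
    then show "Jmat n d \<beta> \<alpha> * v \<alpha> = (if (\<exists>i<n. \<beta> = \<alpha>(i := Suc (\<alpha> i))) then v \<alpha> else 0)"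
      unfolding Jmat_def by (rule ite_helper) (use assms \<open>\<alpha> \<in> mons n d\<close> in auto)
  qed simp
  also have "\<dots> = (\<Sum>\<alpha>\<in>?A. v \<alpha>)"
    by (rule sum.inter_filter[symmetric, OF finite_mons])
  also have "?A = ?g ` ?I"
  proof
    show "?A \<subseteq> ?g ` ?I"
    proof
      fix \<alpha> assume "\<alpha> \<in> ?A"
      then obtain i where i: "i < n" "\<beta> = \<alpha>(i := Suc (\<alpha> i))" by auto
      then have "\<alpha> = ?g i" by auto
      moreover have "i \<in> ?I" using i by auto
      ultimately show "\<alpha> \<in> ?g ` ?I" by blast
    qed
    show "?g ` ?I \<subseteq> ?A"
    proof
      fix \<alpha> assume "\<alpha> \<in> ?g ` ?I"
      then obtain i where i: "i < n" "\<beta> i > 0" "\<alpha> = ?g i" by auto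
      then have "\<alpha> \<in> mons n d" using mons_dec assms by auto
      moreover have "\<beta> = \<alpha>(i := Suc (\<alpha> i))" using i by auto
      ultimately show "\<alpha> \<in> ?A" using i by blast
    qed
  qed
  also have "(\<Sum>\<alpha>\<in>?g ` ?I. v \<alpha>) = (\<Sum>i\<in>?I. v (?g i))"
  proof (rule sum.reindex_cong[where l = ?g])
    show "inj_on ?g ?I"
    proof (rule inj_onI)
      fix i j assume ij: "i \<in> ?I" "j \<in> ?I" "?g i = ?g j"
      show "i = j"
      proof (rule ccontr)
        assume "i \<noteq> j"
        then have "?g i i = \<beta> i - 1" "?g j i = \<beta> i" by auto
        with ij show False by auto
      qed
    qed
  qed auto
  finally show ?thesis .
qed


definition Sv :: "nat \<Rightarrow> (nat \<Rightarrow> real) \<Rightarrow> (nat \<Rightarrow> nat) \<Rightarrow> real" where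
  "Sv n a \<beta> = (\<Sum>i<n. real (\<beta> i) * a i)"

definition pf :: "nat \<Rightarrow> (nat \<Rightarrow> nat) \<Rightarrow> real" where
  "pf n \<beta> = (\<Prod>i<n. fact (\<beta> i))"

lemma pf_pos: "pf n \<beta> > 0"
  unfolding pf_def by (intro prod_pos) auto

lemma sum_remove_i:
  fixes f :: "nat \<Rightarrow> 'b::comm_monoid_add"
  assumes "i < n"
  shows "(\<Sum>l<n. f l) = f i + (\<Sum>l\<in>{..<n}-{i}. f l)"
  using assms by (subst sum.remove[of _ i]) auto

lemma prod_remove_i:
  fixes f :: "nat \<Rightarrow> 'b::comm_monoid_mult"
  assumes "i < n"
  shows "(\<Prod>l<n. f l) = f i * (\<Prod>l\<in>{..<n}-{i}. f l)"
  using assms by (subst prod.remove[of _ i]) auto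

lemma pf_dec:
  assumes "i < n" "\<beta> i > 0"
  shows "pf n (\<beta>(i := \<beta> i - 1)) * real (\<beta> i) = pf n \<beta>"
proof -
  have r: "(\<Prod>l\<in>{..<n}-{i}. (fact ((\<beta>(i := \<beta> i - 1)) l) :: real)) = (\<Prod>l\<in>{..<n}-{i}. fact (\<beta> l))"
    by (rule prod.cong) auto
  have f: "(fact (\<beta> i) :: real) = real (\<beta> i) * fact (\<beta> i - 1)"
    using assms(2) by (metis Suc_diff_1 fact_Suc of_nat_Suc)
  show ?thesis
    unfolding pf_def using prod_remove_i[OF assms(1), of "\<lambda>l. (fact ((\<beta>(i := \<beta> i - 1)) l) :: real)"]
      prod_remove_i[OF assms(1), of "\<lambda>l. (fact (\<beta> l) :: real)"] r f by simp
qed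

lemma Sv_dec:
  assumes "i < n" "\<beta> i > 0"
  shows "Sv n a (\<beta>(i := \<beta> i - 1)) = Sv n a \<beta> - a i"
proof -
  have r: "(\<Sum>l\<in>{..<n}-{i}. real ((\<beta>(i := \<beta> i - 1)) l) * a l) = (\<Sum>l\<in>{..<n}-{i}. real (\<beta> l) * a l)"
    by (rule sum.cong) auto
  have f: "real (\<beta> i - 1) = real (\<beta> i) - 1" using assms(2) by simp
  show ?thesis
    unfolding Sv_def using sum_remove_i[OF assms(1), of "\<lambda>l. real ((\<beta>(i := \<beta> i - 1)) l) * a l"]
      sum_remove_i[OF assms(1), of "\<lambda>l. real (\<beta> l) * a l"] r f by (simp add: algebra_simps)
qed

lemma J_formula_step:
  assumes hv: "\<And>\<gamma>. \<gamma> \<in> mons n d \<Longrightarrow> v \<gamma> = K / pf n \<gamma> * Sv n a \<gamma>"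
    and b: "\<beta> \<in> mons n (Suc d)"
  shows "Japply n d v \<beta> = K * real d / pf n \<beta> * Sv n a \<beta>"
proof -
  let ?I = "{i. i < n \<and> \<beta> i > 0}"
  have "Japply n d v \<beta> = (\<Sum>i\<in>?I. v (\<beta>(i := \<beta> i - 1)))"
    by (rule Japply_step[OF b])
  also have "\<dots> = (\<Sum>i\<in>?I. K / pf n \<beta> * (real (\<beta> i) * (Sv n a \<beta> - a i)))"
  proof (rule sum.cong)
    fix i assume i: "i \<in> ?I"
    have m: "\<beta>(i := \<beta> i - 1) \<in> mons n d" using mons_dec b i by auto
    have p: "pf n (\<beta>(i := \<beta> i - 1)) = pf n \<beta> / real (\<beta> i)"
      using pf_dec[of i n \<beta>] i by (simp add: field_simps)
    show "v (\<beta>(i := \<beta> i - 1)) = K / pf n \<beta> * (real (\<beta> i) * (Sv n a \<beta> - a i))"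
      using hv[OF m] p Sv_dec[of i n \<beta> a] i by simp
  qed simp
  also have "\<dots> = (\<Sum>i<n. K / pf n \<beta> * (real (\<beta> i) * (Sv n a \<beta> - a i)))"
    by (rule sum.mono_neutral_left) auto
  also have "\<dots> = K / pf n \<beta> * ((\<Sum>i<n. real (\<beta> i)) * Sv n a \<beta> - Sv n a \<beta>)"
  proof -
    have e1: "(\<Sum>i<n. K / pf n \<beta> * (real (\<beta> i) * (Sv n a \<beta> - a i))) = K / pf n \<beta> * (\<Sum>i<n. real (\<beta> i) * Sv n a \<beta> - real (\<beta> i) * a i)"
      by (simp add: sum_distrib_left right_diff_distrib)
    have e2: "(\<Sum>i<n. real (\<beta> i) * Sv n a \<beta> - real (\<beta> i) * a i) = (\<Sum>i<n. real (\<beta> i)) * Sv n a \<beta> - Sv n a \<beta>"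
      by (simp only: sum_subtractf sum_distrib_right[symmetric]) (simp add: Sv_def)
    show ?thesis using e1 e2 by simp
  qed
  also have "(\<Sum>i<n. real (\<beta> i)) = real (Suc d)"
    using b unfolding mons_def by (metis (mono_tags, lifting) mem_Collect_eq of_nat_sum)
  finally show ?thesis by (simp add: algebra_simps)
qed


lemma mons1_unit:
  assumes "\<gamma> \<in> mons n 1"
  shows "\<exists>k<n. \<gamma> = (\<lambda>j. if j = k then 1 else 0)"
proof -
  have s: "(\<Sum>l<n. \<gamma> l) = 1" and z: "\<forall>i\<ge>n. \<gamma> i = 0" using assms unfolding mons_def by auto
  obtain k where k: "k < n" "\<gamma> k \<noteq> 0"
  proof (rule ccontr)
    assume "\<not> thesis"
    then have "\<forall>k<n. \<gamma> k = 0" using that by blast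
    then have "(\<Sum>l<n. \<gamma> l) = 0" by simp
    with s show False by simp
  qed
  have r: "\<gamma> k + (\<Sum>l\<in>{..<n}-{k}. \<gamma> l) = 1" using sum_remove_i[OF k(1), of \<gamma>] s by simp
  have gk: "\<gamma> k = 1" using r k(2) by arith
  have rest: "(\<Sum>l\<in>{..<n}-{k}. \<gamma> l) = 0" using r k(2) by arith
  have "\<gamma> l = 0" if "l \<noteq> k" for l
  proof (cases "l < n")
    case True
    then show ?thesis using rest that by (simp add: sum_eq_0_iff)
  next
    case False
    then show ?thesis using z by simp
  qed
  then have "\<gamma> = (\<lambda>j. if j = k then 1 else 0)" using gk by auto
  then show ?thesis using k(1) by blast
qed

lemma lin_vec_formula:
  assumes "\<gamma> \<in> mons n 1"
  shows "lin_vec n a \<gamma> = 1 / pf n \<gamma> * Sv n a \<gamma>"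
proof -
  obtain k where k: "k < n" "\<gamma> = (\<lambda>j. if j = k then 1 else 0)" using mons1_unit[OF assms] by blast
  have "lin_vec n a \<gamma> = (\<Sum>i<n. if i = k then a i else 0)"
    unfolding lin_vec_def k(2)
  proof (rule sum.cong)
    fix i assume "i \<in> {..<n}"
    have "((\<lambda>j. if j = k then 1 else 0) = (\<lambda>j. if j = i then (1::nat) else 0)) = (i = k)"
      by (metis (mono_tags, lifting) zero_neq_one)
    then show "(if (\<lambda>j. if j = k then 1 else 0) = (\<lambda>j. if j = i then (1::nat) else 0) then a i else 0) = (if i = k then a i else 0)"
      by simp
  qed simp
  also have "\<dots> = a k" using k(1) by simp
  finally have l: "lin_vec n a \<gamma> = a k" .
  have p: "pf n \<gamma> = 1" unfolding pf_def k(2) by (intro prod.neutral) auto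
  have sv: "Sv n a \<gamma> = a k"
  proof -
    have "Sv n a \<gamma> = (\<Sum>i<n. if i = k then a i else 0)"
      unfolding Sv_def k(2) by (rule sum.cong) auto
    then show ?thesis using k(1) by simp
  qed
  show ?thesis using l p sv by simp
qed

lemma u_formula:
  assumes "\<beta> \<in> mons n 3"
  shows "Japply n 2 (Japply n 1 (lin_vec n a)) \<beta> = 2 / pf n \<beta> * Sv n a \<beta>"
proof -
  have v2: "Japply n 1 (lin_vec n a) \<gamma> = 1 / pf n \<gamma> * Sv n a \<gamma>" if "\<gamma> \<in> mons n 2" for \<gamma>
    using J_formula_step[of n 1 "lin_vec n a" 1 a \<gamma>] lin_vec_formula that by (simp add: numeral_2_eq_2)
  show ?thesis
    using J_formula_step[of n 2 "Japply n 1 (lin_vec n a)" 1 a \<beta>] v2 assms by (simp add: numeral_3_eq_3)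
qed

lemma Zmon_eq: "Zmon n 3 (Japply n 2 (Japply n 1 (lin_vec n a))) = card {\<beta> \<in> mons n 3. Sv n a \<beta> = 0}"
  unfolding Zmon_def
proof (rule arg_cong[where f = card], rule Collect_cong)
  fix \<beta>
  show "(\<beta> \<in> mons n 3 \<and> Japply n 2 (Japply n 1 (lin_vec n a)) \<beta> = 0) = (\<beta> \<in> mons n 3 \<and> Sv n a \<beta> = 0)"
    using u_formula[of \<beta> n a] pf_pos[of n \<beta>] by auto
qed


definition phi :: "nat \<Rightarrow> (nat \<Rightarrow> nat) \<Rightarrow> nat multiset" where
  "phi n \<beta> = (\<Sum>i<n. replicate_mset (\<beta> i) i)"

lemma count_phi: "count (phi n \<beta>) x = (if x < n then \<beta> x else 0)"
  unfolding phi_def count_sum by (simp add: count_replicate_mset)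

lemma size_phi: "size (phi n \<beta>) = (\<Sum>i<n. \<beta> i)"
  unfolding phi_def by (induction n) auto

lemma summ_phi: "sum_mset (image_mset a (phi n \<beta>)) = (\<Sum>i<n. real (\<beta> i) * a i)"
  unfolding phi_def by (induction n) auto

lemma set_phi: "set_mset (phi n \<beta>) \<subseteq> {..<n}"
proof
  fix x assume "x \<in># phi n \<beta>"
  then have "count (phi n \<beta>) x > 0" by simp
  then show "x \<in> {..<n}" unfolding count_phi by (auto split: if_splits)
qed

lemma Zcount_le_T:
  "card {\<beta> \<in> mons n 3. Sv n a \<beta> = 0}
   \<le> card {M \<in> multisets_of_size {..<n} 3. sum_mset (image_mset a M) = 0}"
proof (rule card_inj_on_le[where f = "phi n"])
  show "inj_on (phi n) {\<beta> \<in> mons n 3. Sv n a \<beta> = 0}"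
  proof (rule inj_onI)
    fix \<beta> \<gamma> assume b: "\<beta> \<in> {\<beta> \<in> mons n 3. Sv n a \<beta> = 0}" and c: "\<gamma> \<in> {\<beta> \<in> mons n 3. Sv n a \<beta> = 0}"
      and e: "phi n \<beta> = phi n \<gamma>"
    show "\<beta> = \<gamma>"
    proof
      fix x
      have "count (phi n \<beta>) x = count (phi n \<gamma>) x" using e by simp
      then show "\<beta> x = \<gamma> x" using b c unfolding count_phi mons_def by (auto split: if_splits)
    qed
  qed
  show "phi n ` {\<beta> \<in> mons n 3. Sv n a \<beta> = 0} \<subseteq> {M \<in> multisets_of_size {..<n} 3. sum_mset (image_mset a M) = 0}"
  proof
    fix M assume "M \<in> phi n ` {\<beta> \<in> mons n 3. Sv n a \<beta> = 0}"
    then obtain \<beta> where b: "\<beta> \<in> mons n 3" "Sv n a \<beta> = 0" "M = phi n \<beta>" by auto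
    have "size M = 3" using b size_phi[of n \<beta>] unfolding mons_def by simp
    moreover have "set_mset M \<subseteq> {..<n}" using b set_phi by simp
    moreover have "sum_mset (image_mset a M) = 0" using b summ_phi[of a n \<beta>] unfolding Sv_def by simp
    ultimately show "M \<in> {M \<in> multisets_of_size {..<n} 3. sum_mset (image_mset a M) = 0}"
      unfolding multisets_of_size_def by simp
  qed
  show "finite {M \<in> multisets_of_size {..<n} 3. sum_mset (image_mset a M) = 0}"
    by (rule finite_subset[OF _ finite_multisets_of_size[of "{..<n}" 3]]) auto
qed



lemma choose3_6: "((m + 2) choose 3) * 6 = (m + 2) * (m + 1) * (m::nat)"
proof (induction m)
  case 0 then show ?case by simp
next
  case (Suc m)
  have c2: "((m + 2) choose 2) * 2 = (m + 2) * (m + 1)"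
    by (induction m) (auto simp: numeral_eq_Suc)
  have "(Suc m + 2) choose 3 = ((m + 2) choose 2) + ((m + 2) choose 3)"
    by (simp add: numeral_eq_Suc)
  then have "((Suc m + 2) choose 3) * 6 = ((m + 2) choose 2) * 2 * 3 + ((m + 2) choose 3) * 6"
    by simp
  also have "\<dots> = (m + 2) * (m + 1) * 3 + (m + 2) * (m + 1) * m" using c2 Suc.IH by simp
  finally show ?case by (simp add: algebra_simps)
qed

lemma polyA:
  fixes N P Z :: int
  assumes "N \<ge> 2" "P \<ge> 0" "Z \<ge> 0"
  shows "Z*(Z+1)*(Z+2) + 3*N*P*(N+1) \<le> (N+P+Z+1)*(N+P+Z)*(N+P+Z-1) - 6*(N+P+Z)*N + 60"
proof -
  have id: "(N+P+Z+1)*(N+P+Z)*(N+P+Z-1) - 6*(N+P+Z)*N + 60 - (Z*(Z+1)*(Z+2) + 3*N*P*(N+1))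
     = 3*N*Z*(N-2) + 3*Z*(Z*(N-1) - 1) + (P*P*P - P) + 3*N*((P-1)*(P-2)) + (N-4)*(N-5)*(N+3)
       + 3*P*P*Z + 3*P*Z*Z + 6*N*P*Z"
    by (simp add: algebra_simps)
  have t1: "3*N*Z*(N-2) \<ge> 0" using assms by simp
  have t2: "3*Z*(Z*(N-1) - 1) \<ge> 0"
  proof (cases "Z = 0")
    case False
    then have "Z*(N-1) \<ge> 1" using assms by (smt (verit) mult_le_cancel_left1)
    then show ?thesis using assms by simp
  qed simp
  have t3: "P*P*P - P \<ge> 0"
  proof (cases "P = 0")
    case False
    then have "P*P \<ge> 1" using assms by (smt (verit) mult_le_cancel_left1)
    then have "P*(P*P) \<ge> P*1" using assms by (intro mult_left_mono) auto
    then show ?thesis by (simp add: algebra_simps)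
  qed simp
  have t4: "(P-1)*(P-2) \<ge> 0"
    by (cases "P \<le> 1") (auto intro: mult_nonneg_nonneg mult_nonpos_nonpos)
  have t4': "3*N*((P-1)*(P-2)) \<ge> 0" using t4 assms by simp
  have t5: "(N-4)*(N-5) \<ge> 0"
    by (cases "N \<le> 4") (auto intro: mult_nonneg_nonneg mult_nonpos_nonpos)
  have t5': "(N-4)*(N-5)*(N+3) \<ge> 0" using t5 assms by simp
  have t6: "3*P*P*Z + 3*P*Z*Z + 6*N*P*Z \<ge> 0" using assms by simp
  show ?thesis using id t1 t2 t3 t4' t5' t6 by linarith
qed


lemma polyB:
  fixes N P Z :: int
  assumes "N \<ge> 2" "P \<ge> 0" "Z \<ge> 0"
  shows "Z*(Z+1)*(Z+2) + 3*N*P*(P+1) \<le> (N+P+Z+1)*(N+P+Z)*(N+P+Z-1) - 6*(N+P+Z)*N + 60"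
proof -
  have id: "(N+P+Z+1)*(N+P+Z)*(N+P+Z-1) - 6*(N+P+Z)*N + 60 - (Z*(Z+1)*(Z+2) + 3*N*P*(P+1))
     = 3*N*Z*(N-2) + 3*Z*(Z*(N-1) - 1) + (P*P*P - P) + 3*N*P*(N-3) + (N-4)*(N-5)*(N+3) + 6*N
       + 3*P*P*Z + 3*P*Z*Z + 6*N*P*Z"
    by (simp add: algebra_simps)
  have t1: "3*N*Z*(N-2) \<ge> 0" using assms by simp
  have t2: "3*Z*(Z*(N-1) - 1) \<ge> 0"
  proof (cases "Z = 0")
    case False
    then have "Z*(N-1) \<ge> 1" using assms by (smt (verit) mult_le_cancel_left1)
    then show ?thesis using assms by simp
  qed simp
  have t5: "(N-4)*(N-5) \<ge> 0"
    by (cases "N \<le> 4") (auto intro: mult_nonneg_nonneg mult_nonpos_nonpos)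
  have t5': "(N-4)*(N-5)*(N+3) \<ge> 0" using t5 assms by simp
  have t6: "3*P*P*Z + 3*P*Z*Z + 6*N*P*Z \<ge> 0" using assms by simp
  have t7: "(P*P*P - P) + 3*N*P*(N-3) + 6*N \<ge> 0"
  proof (cases "N = 2")
    case True
    have q: "(P-1)*(P-2) \<ge> 0"
      by (cases "P \<le> 1") (auto intro: mult_nonneg_nonneg mult_nonpos_nonpos)
    have "(P-1)*(P-2)*(P+3) \<ge> 0" using q assms by simp
    moreover have "(P*P*P - P) + 3*N*P*(N-3) + 6*N = (P-1)*(P-2)*(P+3) + 6"
      using True by (simp add: algebra_simps)
    ultimately show ?thesis by linarith
  next
    case False
    then have "N \<ge> 3" using assms by simp
    then have a1: "3*N*P*(N-3) \<ge> 0" using assms by simp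
    have "P*P*P - P \<ge> 0"
    proof (cases "P = 0")
      case False
      then have "P*P \<ge> 1" using assms by (smt (verit) mult_le_cancel_left1)
      then have "P*(P*P) \<ge> P*1" using assms by (intro mult_left_mono) auto
      then show ?thesis by (simp add: algebra_simps)
    qed simp
    then show ?thesis using a1 assms by linarith
  qed
  show ?thesis using id t1 t2 t5' t6 t7 by linarith
qed

lemma polyC:
  fixes N P Z :: int
  assumes "N \<ge> 2" "P \<ge> 0" "Z \<ge> 0"
  shows "Z*(Z+1)*(Z+2) + 6*N*P + 6*N*P*Z \<le> (N+P+Z+1)*(N+P+Z)*(N+P+Z-1) - 6*(N+P+Z)*N + 60"
proof -
  have id: "(N+P+Z+1)*(N+P+Z)*(N+P+Z-1) - 6*(N+P+Z)*N + 60 - (Z*(Z+1)*(Z+2) + 6*N*P + 6*N*P*Z)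
     = 3*N*Z*(N-2) + 3*Z*(Z*(N-1) - 1) + (P*P*P - P) + 3*N*((P-1)*(P-2) + N*P - P) + (N-4)*(N-5)*(N+3)
       + 3*P*P*Z + 3*P*Z*Z"
    by (simp add: algebra_simps)
  have t1: "3*N*Z*(N-2) \<ge> 0" using assms by simp
  have t2: "3*Z*(Z*(N-1) - 1) \<ge> 0"
  proof (cases "Z = 0")
    case False
    then have "Z*(N-1) \<ge> 1" using assms by (smt (verit) mult_le_cancel_left1)
    then show ?thesis using assms by simp
  qed simp
  have t3: "P*P*P - P \<ge> 0"
  proof (cases "P = 0")
    case False
    then have "P*P \<ge> 1" using assms by (smt (verit) mult_le_cancel_left1)
    then have "P*(P*P) \<ge> P*1" using assms by (intro mult_left_mono) auto
    then show ?thesis by (simp add: algebra_simps)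
  qed simp
  have t4: "(P-1)*(P-2) \<ge> 0"
    by (cases "P \<le> 1") (auto intro: mult_nonneg_nonneg mult_nonpos_nonpos)
  have "1*P \<le> N*P" using assms by (intro mult_right_mono) auto
  then have t4b: "N*P - P \<ge> 0" by simp
  have t4': "3*N*((P-1)*(P-2) + N*P - P) \<ge> 0" using t4 t4b assms by simp
  have t5: "(N-4)*(N-5) \<ge> 0"
    by (cases "N \<le> 4") (auto intro: mult_nonneg_nonneg mult_nonpos_nonpos)
  have t5': "(N-4)*(N-5)*(N+3) \<ge> 0" using t5 assms by simp
  have t6: "3*P*P*Z + 3*P*Z*Z \<ge> 0" using assms by simp
  show ?thesis using id t1 t2 t3 t4' t5' t6 by linarith
qed

lemma small_key: "int ((Z + 2) * (Z + 1) * Z + 6 * (N * P) + 3 * (N * P * max (N - 1) (max (P - 1) (2 * Z))))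
     \<le> int ((n + 1) * n * (n - 1)) - 6 * int n * int N + 6 * int n + 6 * cfun n"
  if "N \<ge> 2" "n \<le> 4" "n = N + P + Z" for N P Z n :: nat
proof -
  have c: "N = 2 \<or> N = 3 \<or> N = 4" "P = 0 \<or> P = 1 \<or> P = 2" "Z = 0 \<or> Z = 1 \<or> Z = 2" using that by auto
  show ?thesis using c that(3) by (elim disjE) (simp_all add: cfun_def)
qed

lemma arith_final:
  fixes N P Z n T X :: nat
  assumes N2: "N \<ge> 2" and nd: "n = N + P + Z"
    and hX: "2 * X \<le> N * P * max (N - 1) (max (P - 1) (2 * Z))"
    and hT: "T \<le> ((Z + 2) choose 3) + N * P + X"
  shows "int T \<le> int ((n + 1) choose 3) - int n * int N + int n + cfun n"
proof -
  let ?M = "max (N - 1) (max (P - 1) (2 * Z))"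
  have h6: "6 * T \<le> (Z + 2) * (Z + 1) * Z + 6 * (N * P) + 3 * (N * P * ?M)"
    using hT hX choose3_6[of Z] by linarith
  have c6: "((n + 1) choose 3) * 6 = (n + 1) * n * (n - 1)"
    using choose3_6[of "n - 1"] nd N2 by (simp add: algebra_simps)
  have key: "int ((Z + 2) * (Z + 1) * Z + 6 * (N * P) + 3 * (N * P * ?M))
     \<le> int ((n + 1) * n * (n - 1)) - 6 * int n * int N + 6 * int n + 6 * cfun n"
  proof (cases "n \<ge> 5")
    case True
    then have cf: "6 * int n + 6 * cfun n = 60" unfolding cfun_def by auto
    have nn0: "int ((n + 1) * n * (n - 1)) = (int n + 1) * int n * (int n - 1)"
      using True by (simp add: of_nat_diff algebra_simps)
    have nn: "int ((n + 1) * n * (n - 1)) = (int N + int P + int Z + 1) * (int N + int P + int Z) * (int N + int P + int Z - 1)"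
      using nn0 nd by simp
    have Ms: "?M = N - 1 \<or> ?M = P - 1 \<or> ?M = 2 * Z" by (simp add: max_def)
    have "int ((Z + 2) * (Z + 1) * Z + 6 * (N * P) + 3 * (N * P * ?M))
       \<le> (int N + int P + int Z + 1) * (int N + int P + int Z) * (int N + int P + int Z - 1)
          - 6 * (int N + int P + int Z) * int N + 60"
    proof -
      have zz: "int ((Z + 2) * (Z + 1) * Z) = int Z * (int Z + 1) * (int Z + 2)" by (simp add: algebra_simps)
      have split: "int ((Z + 2) * (Z + 1) * Z + 6 * (N * P) + 3 * (N * P * ?M)) = int ((Z + 2) * (Z + 1) * Z) + int (6 * (N * P) + 3 * (N * P * ?M))"
        by simp
      from Ms show ?thesis
      proof (elim disjE)
        assume M: "?M = N - 1"
        have e: "int (6 * (N * P) + 3 * (N * P * ?M)) = 3 * int N * int P * (int N + 1)"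
          by (simp only: M) (use N2 in \<open>simp add: of_nat_diff algebra_simps\<close>)
        show ?thesis using polyA[of "int N" "int P" "int Z"] N2 zz split e by linarith
      next
        assume M: "?M = P - 1"
        have e: "int (6 * (N * P) + 3 * (N * P * ?M)) = 3 * int N * int P * (int P + 1)"
          by (simp only: M) (cases "P = 0", simp_all add: of_nat_diff algebra_simps)
        show ?thesis using polyB[of "int N" "int P" "int Z"] N2 zz split e by linarith
      next
        assume M: "?M = 2 * Z"
        have e: "int (6 * (N * P) + 3 * (N * P * ?M)) = 6 * int N * int P + 6 * int N * int P * int Z"
          by (simp only: M) (simp add: algebra_simps)
        show ?thesis using polyC[of "int N" "int P" "int Z"] N2 zz split e by linarith
      qed
    qed
    then show ?thesis using nn cf nd by (simp add: algebra_simps)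
  next
    case False
    then have "n \<le> 4" by simp
    then show ?thesis using small_key[of N n P Z] N2 nd by simp
  qed
  have "6 * int T \<le> int ((Z + 2) * (Z + 1) * Z + 6 * (N * P) + 3 * (N * P * ?M))"
    using h6 by linarith
  also note key
  also have "int ((n + 1) * n * (n - 1)) = 6 * int ((n + 1) choose 3)"
    using c6 by linarith
  finally show ?thesis by linarith
qed



lemma size3_cases:
  assumes "size M = 3"
  shows "\<exists>x y z. M = {#x, y, z#}"
proof -
  obtain x M1 where m1: "M = add_mset x M1" using size_eq_Suc_imp_eq_union[of M 2] assms by auto
  then have "size M1 = 2" using assms by simp
  then obtain y M2 where m2: "M1 = add_mset y M2" using size_eq_Suc_imp_eq_union[of M1 1] by auto
  then have "size M2 = 1" using \<open>size M1 = 2\<close> by simp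
  then obtain z M3 where m3: "M2 = add_mset z M3" using size_eq_Suc_imp_eq_union[of M2 0] by auto
  then have "M3 = {#}" using \<open>size M2 = 1\<close> by simp
  then show ?thesis using m1 m2 m3 by blast
qed

lemma count_T:
  fixes a :: "nat \<Rightarrow> real" and n :: nat
  defines "Neg \<equiv> {i. i < n \<and> a i < 0}" and "Pos \<equiv> {i. i < n \<and> a i > 0}" and "Zer \<equiv> {i. i < n \<and> a i = 0}"
  defines "T \<equiv> {M \<in> multisets_of_size {..<n} 3. sum_mset (image_mset a M) = 0}"
  shows "\<exists>X. card T \<le> ((card Zer + 2) choose 3) + card Neg * card Pos + X \<and>
     2 * X \<le> card Neg * card Pos * max (card Neg - 1) (max (card Pos - 1) (2 * card Zer))"
proof -
  define U where "U p = {i'. i' \<in> Neg \<and> i' \<noteq> fst p \<and> a (fst p) + a i' + a (snd p) = 0}" for p :: "nat \<times> nat"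
  define V where "V p = {k. k \<in> Pos \<and> k \<noteq> snd p \<and> a (fst p) + a (snd p) + a k = 0}" for p :: "nat \<times> nat"
  define W where "W p = {k. k \<in> Zer \<and> a (fst p) + a (snd p) = 0}" for p :: "nat \<times> nat"
  define FU where "FU = Sigma (Neg \<times> Pos) U"
  define FV where "FV = Sigma (Neg \<times> Pos) V"
  define FW where "FW = Sigma (Neg \<times> Pos) W"
  define g where "g q = {#fst (fst q), snd q, snd (fst q)#}" for q :: "(nat \<times> nat) \<times> nat"
  define h where "h q = {#fst (fst q), snd (fst q), snd q#}" for q :: "(nat \<times> nat) \<times> nat"
  define PZs where "PZs = {p \<in> Neg \<times> Pos. 2 * a (fst p) + a (snd p) = 0 \<or> a (fst p) + 2 * a (snd p) = 0}"
  define fPZ where "fPZ p = (if 2 * a (fst p) + a (snd p) = 0 then {#fst p, fst p, snd p#} else {#fst p, snd p, snd p#})"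
    for p :: "nat \<times> nat"
  define M where "M = max (card Neg - 1) (max (card Pos - 1) (2 * card Zer))"
  have fNeg: "finite Neg" and fPos: "finite Pos" and fZer: "finite Zer"
    unfolding Neg_def Pos_def Zer_def by auto
  have fU: "finite (U p)" for p unfolding U_def using fNeg by auto
  have fV: "finite (V p)" for p unfolding V_def using fPos by auto
  have fW: "finite (W p)" for p unfolding W_def using fZer by auto
  have fFU: "finite FU" unfolding FU_def using fNeg fPos fU by auto
  have fFV: "finite FV" unfolding FV_def using fNeg fPos fV by auto
  have fFW: "finite FW" unfolding FW_def using fNeg fPos fW by auto
  have fPZs: "finite PZs" unfolding PZs_def using fNeg fPos by auto

  have core: "{#x, y, z#} \<in> fPZ ` PZs \<union> h ` FW \<union> g ` FU \<union> h ` FV"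
    if xyz: "x < n" "y < n" "z < n" "a x < 0" "a y > 0" "a x + a y + a z = 0" for x y z
  proof -
    have xN: "x \<in> Neg" and yP: "y \<in> Pos" using xyz unfolding Neg_def Pos_def by auto
    consider "a z = 0" | "a z < 0" "z = x" | "a z < 0" "z \<noteq> x" | "a z > 0" "z = y" | "a z > 0" "z \<noteq> y"
      by linarith
    then show ?thesis
    proof cases
      case 1
      then have "((x, y), z) \<in> FW" using xN yP xyz unfolding FW_def W_def Zer_def by auto
      moreover have "h ((x, y), z) = {#x, y, z#}" unfolding h_def by simp
      ultimately have "{#x, y, z#} \<in> h ` FW" by (metis image_eqI)
      then show ?thesis by blast
    next
      case 2
      then have "(x, y) \<in> PZs" using xN yP xyz unfolding PZs_def by auto
      moreover have "fPZ (x, y) = {#x, y, z#}" using 2 xyz unfolding fPZ_def by (simp add: add_mset_commute)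
      ultimately have "{#x, y, z#} \<in> fPZ ` PZs" by (metis image_eqI)
      then show ?thesis by blast
    next
      case 3
      then have "((x, y), z) \<in> FU" using xN yP xyz unfolding FU_def U_def Neg_def by auto
      moreover have "g ((x, y), z) = {#x, y, z#}" unfolding g_def by (simp add: add_mset_commute)
      ultimately have "{#x, y, z#} \<in> g ` FU" by (metis image_eqI)
      then show ?thesis by blast
    next
      case 4
      then have "(x, y) \<in> PZs" using xN yP xyz unfolding PZs_def by auto
      moreover have "2 * a x + a y \<noteq> 0" using 4 xyz by auto
      then have "fPZ (x, y) = {#x, y, z#}" using 4 unfolding fPZ_def by simp
      ultimately have "{#x, y, z#} \<in> fPZ ` PZs" by (metis image_eqI)
      then show ?thesis by blast
    next
      case 5
      then have "((x, y), z) \<in> FV" using xN yP xyz unfolding FV_def V_def Pos_def by auto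
      moreover have "h ((x, y), z) = {#x, y, z#}" unfolding h_def by simp
      ultimately have "{#x, y, z#} \<in> h ` FV" by (metis image_eqI)
      then show ?thesis by blast
    qed
  qed
  have C1: "T \<subseteq> multisets_of_size Zer 3 \<union> (fPZ ` PZs \<union> h ` FW \<union> g ` FU \<union> h ` FV)"
  proof
    fix A assume "A \<in> T"
    then have sz: "size A = 3" and st: "set_mset A \<subseteq> {..<n}" and sm: "sum_mset (image_mset a A) = 0"
      unfolding T_def multisets_of_size_def by auto
    obtain x y z where A: "A = {#x, y, z#}" using size3_cases[OF sz] by blast
    have lt: "x < n" "y < n" "z < n" using st A by auto
    have s0: "a x + a y + a z = 0" using sm A by (simp add: algebra_simps)
    have perm: "{#x, y, z#} = {#x, z, y#}" "{#x, y, z#} = {#y, x, z#}" "{#x, y, z#} = {#y, z, x#}"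
      "{#x, y, z#} = {#z, x, y#}" "{#x, y, z#} = {#z, y, x#}"
      by (simp_all add: add_mset_commute)
    show "A \<in> multisets_of_size Zer 3 \<union> (fPZ ` PZs \<union> h ` FW \<union> g ` FU \<union> h ` FV)"
    proof (cases "a x = 0 \<and> a y = 0 \<and> a z = 0")
      case True
      then have "set_mset A \<subseteq> Zer" using A lt unfolding Zer_def by auto
      then show ?thesis using sz unfolding multisets_of_size_def by auto
    next
      case False
      have "A \<in> fPZ ` PZs \<union> h ` FW \<union> g ` FU \<union> h ` FV"
      proof -
        consider "a x < 0" "a y > 0" | "a x < 0" "a z > 0" | "a y < 0" "a x > 0" | "a y < 0" "a z > 0"
          | "a z < 0" "a x > 0" | "a z < 0" "a y > 0"
          using False s0 by linarith
        then show ?thesis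
        proof cases
          case 1 then show ?thesis using core[of x y z] lt s0 A by simp
        next
          case 2
          have "{#x, z, y#} \<in> fPZ ` PZs \<union> h ` FW \<union> g ` FU \<union> h ` FV"
            by (rule core) (use lt s0 2 in \<open>simp_all add: algebra_simps\<close>)
          then show ?thesis using A perm(1) by metis
        next
          case 3
          have "{#y, x, z#} \<in> fPZ ` PZs \<union> h ` FW \<union> g ` FU \<union> h ` FV"
            by (rule core) (use lt s0 3 in \<open>simp_all add: algebra_simps\<close>)
          then show ?thesis using A perm(2) by metis
        next
          case 4
          have "{#y, z, x#} \<in> fPZ ` PZs \<union> h ` FW \<union> g ` FU \<union> h ` FV"
            by (rule core) (use lt s0 4 in \<open>simp_all add: algebra_simps\<close>)
          then show ?thesis using A perm(3) by metis
        next
          case 5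
          have "{#z, x, y#} \<in> fPZ ` PZs \<union> h ` FW \<union> g ` FU \<union> h ` FV"
            by (rule core) (use lt s0 5 in \<open>simp_all add: algebra_simps\<close>)
          then show ?thesis using A perm(4) by metis
        next
          case 6
          have "{#z, y, x#} \<in> fPZ ` PZs \<union> h ` FW \<union> g ` FU \<union> h ` FV"
            by (rule core) (use lt s0 6 in \<open>simp_all add: algebra_simps\<close>)
          then show ?thesis using A perm(5) by metis
        qed
      qed
      then show ?thesis by blast
    qed
  qed
  have fms: "finite (multisets_of_size Zer 3)" using fZer by auto
  have C2: "card T \<le> card (multisets_of_size Zer 3) + card (fPZ ` PZs) + card (h ` FW) + card (g ` FU) + card (h ` FV)"
  proof -
    have "card T \<le> card (multisets_of_size Zer 3 \<union> (fPZ ` PZs \<union> h ` FW \<union> g ` FU \<union> h ` FV))"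
      by (rule card_mono) (use C1 fms fPZs fFW fFU fFV in auto)
    also have "\<dots> \<le> card (multisets_of_size Zer 3) + card (fPZ ` PZs \<union> h ` FW \<union> g ` FU \<union> h ` FV)"
      by (rule card_Un_le)
    also have "card (fPZ ` PZs \<union> h ` FW \<union> g ` FU \<union> h ` FV) \<le> card (fPZ ` PZs \<union> h ` FW \<union> g ` FU) + card (h ` FV)"
      by (rule card_Un_le)
    also have "card (fPZ ` PZs \<union> h ` FW \<union> g ` FU) \<le> card (fPZ ` PZs \<union> h ` FW) + card (g ` FU)"
      by (rule card_Un_le)
    also have "card (fPZ ` PZs \<union> h ` FW) \<le> card (fPZ ` PZs) + card (h ` FW)"
      by (rule card_Un_le)
    finally show ?thesis by simp
  qed
  have cms: "card (multisets_of_size Zer 3) = (card Zer + 2) choose 3"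
    using card_multisets_of_size[OF fZer, of 3] by simp
  have C3: "card (fPZ ` PZs) \<le> card Neg * card Pos"
  proof -
    have "card (fPZ ` PZs) \<le> card PZs" by (rule card_image_le[OF fPZs])
    also have "\<dots> \<le> card (Neg \<times> Pos)" by (rule card_mono) (use fNeg fPos in \<open>auto simp: PZs_def\<close>)
    finally show ?thesis by (simp add: card_cartesian_product)
  qed
  have C4: "card (h ` FW) \<le> card FW" by (rule card_image_le[OF fFW])
  have C5: "2 * card (g ` FU) \<le> card FU"
  proof -
    define A1 where "A1 = {q \<in> FU. fst (fst q) < snd q}"
    define A2 where "A2 = {q \<in> FU. snd q < fst (fst q)}"
    have neq: "snd q \<noteq> fst (fst q)" if "q \<in> FU" for q using that unfolding FU_def U_def by auto
    have un: "FU = A1 \<union> A2" using neq unfolding A1_def A2_def by (auto simp: nat_neq_iff)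
    have dj: "A1 \<inter> A2 = {}" unfolding A1_def A2_def by auto
    have sw: "((snd q, snd (fst q)), fst (fst q)) \<in> FU \<and> g ((snd q, snd (fst q)), fst (fst q)) = g q"
      if "q \<in> FU" for q
    proof -
      obtain i j k where q: "q = ((i, j), k)" by (metis prod.collapse)
      have "((k, j), i) \<in> FU" using that unfolding q FU_def U_def by (auto simp: algebra_simps)
      moreover have "g ((k, j), i) = g ((i, j), k)" unfolding g_def by (simp add: add_mset_commute)
      ultimately show ?thesis unfolding q by simp
    qed
    have s1: "g ` FU \<subseteq> g ` A1"
    proof
      fix m assume "m \<in> g ` FU"
      then obtain q where q: "q \<in> FU" "m = g q" by blast
      show "m \<in> g ` A1"
      proof (cases "q \<in> A1")
        case True then show ?thesis using q by blast
      next
        case False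
        then have "q \<in> A2" using un q by blast
        then have "((snd q, snd (fst q)), fst (fst q)) \<in> A1" using sw[OF q(1)] unfolding A1_def A2_def by auto
        then show ?thesis using sw[OF q(1)] q by (metis image_eqI)
      qed
    qed
    have s2: "g ` FU \<subseteq> g ` A2"
    proof
      fix m assume "m \<in> g ` FU"
      then obtain q where q: "q \<in> FU" "m = g q" by blast
      show "m \<in> g ` A2"
      proof (cases "q \<in> A2")
        case True then show ?thesis using q by blast
      next
        case False
        then have "q \<in> A1" using un q by blast
        then have "((snd q, snd (fst q)), fst (fst q)) \<in> A2" using sw[OF q(1)] unfolding A1_def A2_def by auto
        then show ?thesis using sw[OF q(1)] q by (metis image_eqI)
      qed
    qed
    have fA1: "finite A1" and fA2: "finite A2" using fFU unfolding A1_def A2_def by auto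
    have "card (g ` FU) \<le> card A1"
      using card_mono[OF finite_imageI[OF fA1] s1] card_image_le[OF fA1, of g] by linarith
    moreover have "card (g ` FU) \<le> card A2"
      using card_mono[OF finite_imageI[OF fA2] s2] card_image_le[OF fA2, of g] by linarith
    moreover have "card FU = card A1 + card A2" using un dj fA1 fA2 card_Un_disjoint by metis
    ultimately show ?thesis by linarith
  qed
  have C6: "2 * card (h ` FV) \<le> card FV"
  proof -
    define A1 where "A1 = {q \<in> FV. snd (fst q) < snd q}"
    define A2 where "A2 = {q \<in> FV. snd q < snd (fst q)}"
    have neq: "snd q \<noteq> snd (fst q)" if "q \<in> FV" for q using that unfolding FV_def V_def by auto
    have un: "FV = A1 \<union> A2" using neq unfolding A1_def A2_def by (auto simp: nat_neq_iff)
    have dj: "A1 \<inter> A2 = {}" unfolding A1_def A2_def by auto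
    have sw: "((fst (fst q), snd q), snd (fst q)) \<in> FV \<and> h ((fst (fst q), snd q), snd (fst q)) = h q"
      if "q \<in> FV" for q
    proof -
      obtain i j k where q: "q = ((i, j), k)" by (metis prod.collapse)
      have "((i, k), j) \<in> FV" using that unfolding q FV_def V_def by (auto simp: algebra_simps)
      moreover have "h ((i, k), j) = h ((i, j), k)" unfolding h_def by (simp add: add_mset_commute)
      ultimately show ?thesis unfolding q by simp
    qed
    have s1: "h ` FV \<subseteq> h ` A1"
    proof
      fix m assume "m \<in> h ` FV"
      then obtain q where q: "q \<in> FV" "m = h q" by blast
      show "m \<in> h ` A1"
      proof (cases "q \<in> A1")
        case True then show ?thesis using q by blast
      next
        case False
        then have "q \<in> A2" using un q by blast
        then have "((fst (fst q), snd q), snd (fst q)) \<in> A1" using sw[OF q(1)] unfolding A1_def A2_def by auto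
        then show ?thesis using sw[OF q(1)] q by (metis image_eqI)
      qed
    qed
    have s2: "h ` FV \<subseteq> h ` A2"
    proof
      fix m assume "m \<in> h ` FV"
      then obtain q where q: "q \<in> FV" "m = h q" by blast
      show "m \<in> h ` A2"
      proof (cases "q \<in> A2")
        case True then show ?thesis using q by blast
      next
        case False
        then have "q \<in> A1" using un q by blast
        then have "((fst (fst q), snd q), snd (fst q)) \<in> A2" using sw[OF q(1)] unfolding A1_def A2_def by auto
        then show ?thesis using sw[OF q(1)] q by (metis image_eqI)
      qed
    qed
    have fA1: "finite A1" and fA2: "finite A2" using fFV unfolding A1_def A2_def by auto
    have "card (h ` FV) \<le> card A1"
      using card_mono[OF finite_imageI[OF fA1] s1] card_image_le[OF fA1, of h] by linarith
    moreover have "card (h ` FV) \<le> card A2"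
      using card_mono[OF finite_imageI[OF fA2] s2] card_image_le[OF fA2, of h] by linarith
    moreover have "card FV = card A1 + card A2" using un dj fA1 fA2 card_Un_disjoint by metis
    ultimately show ?thesis by linarith
  qed
  have C7: "card (U p) + card (V p) + 2 * card (W p) \<le> M" if p: "p \<in> Neg \<times> Pos" for p
  proof -
    obtain i j where pij: "p = (i, j)" by (metis prod.collapse)
    have i: "i \<in> Neg" "a i < 0" and j: "j \<in> Pos" "a j > 0" using p unfolding pij Neg_def Pos_def by auto
    show ?thesis
    proof (cases "a i + a j = 0")
      case True
      have "U p = {}" using True unfolding U_def pij Neg_def by auto
      moreover have "V p = {}" using True unfolding V_def pij Pos_def by auto
      moreover have "W p = Zer" using True unfolding W_def pij by auto
      ultimately show ?thesis unfolding M_def by simp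
    next
      case False
      have W0: "W p = {}" using False unfolding W_def pij by auto
      show ?thesis
      proof (cases "U p = {}")
        case True
        have "V p \<subseteq> Pos - {j}" unfolding V_def pij by auto
        then have "card (V p) \<le> card (Pos - {j})" using fPos by (intro card_mono) auto
        also have "\<dots> = card Pos - 1" using j(1) fPos by simp
        finally show ?thesis using True W0 unfolding M_def by simp
      next
        case False
        then obtain i' where i': "i' \<in> U p" by blast
        have V0: "V p = {}"
        proof (rule ccontr)
          assume "V p \<noteq> {}"
          then obtain k where k: "k \<in> V p" by blast
          have "a i' < 0" "a k > 0" "a i + a i' + a j = 0" "a i + a j + a k = 0"
            using i' k unfolding U_def V_def pij Neg_def Pos_def by auto
          then show False by linarith
        qed
        have "U p \<subseteq> Neg - {i}" unfolding U_def pij by auto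
        then have "card (U p) \<le> card (Neg - {i})" using fNeg by (intro card_mono) auto
        also have "\<dots> = card Neg - 1" using i(1) fNeg by simp
        finally show ?thesis using V0 W0 unfolding M_def by simp
      qed
    qed
  qed
  have cFU: "card FU = (\<Sum>p\<in>Neg \<times> Pos. card (U p))" unfolding FU_def using fNeg fPos fU by simp
  have cFV: "card FV = (\<Sum>p\<in>Neg \<times> Pos. card (V p))" unfolding FV_def using fNeg fPos fV by simp
  have cFW: "card FW = (\<Sum>p\<in>Neg \<times> Pos. card (W p))" unfolding FW_def using fNeg fPos fW by simp
  have "2 * card FW + card FU + card FV = (\<Sum>p\<in>Neg \<times> Pos. card (U p) + card (V p) + 2 * card (W p))"
    unfolding cFU cFV cFW by (simp add: sum.distrib sum_distrib_left)
  also have "\<dots> \<le> (\<Sum>p\<in>Neg \<times> Pos. M)" by (rule sum_mono) (rule C7)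
  also have "\<dots> = card Neg * card Pos * M" by (simp add: card_cartesian_product)
  finally have key: "2 * card FW + card FU + card FV \<le> card Neg * card Pos * M" .
  have e1: "card T \<le> ((card Zer + 2) choose 3) + card Neg * card Pos + (card (h ` FW) + card (g ` FU) + card (h ` FV))"
    using C2 cms C3 by linarith
  have e2: "2 * (card (h ` FW) + card (g ` FU) + card (h ` FV)) \<le> 2 * card FW + card FU + card FV"
    using C4 C5 C6 by simp
  have e3: "2 * (card (h ` FW) + card (g ` FU) + card (h ` FV)) \<le> card Neg * card Pos * max (card Neg - 1) (max (card Pos - 1) (2 * card Zer))"
    using e2 key unfolding M_def by (rule order.trans)
  show ?thesis using e1 e3 by blast
qed


lemma card_partition:
  fixes a :: "nat \<Rightarrow> real"
  shows "card {i. i < n \<and> a i < 0} + card {i. i < n \<and> a i > 0} + card {i. i < n \<and> a i = 0} = n"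
proof -
  have u: "{..<n} = ({i. i < n \<and> a i < 0} \<union> {i. i < n \<and> a i > 0}) \<union> {i. i < n \<and> a i = 0}"
    by auto
  have "card {..<n} = card ({i. i < n \<and> a i < 0} \<union> {i. i < n \<and> a i > 0}) + card {i. i < n \<and> a i = 0}"
    unfolding u by (rule card_Un_disjoint) auto
  also have "card ({i. i < n \<and> a i < 0} \<union> {i. i < n \<and> a i > 0}) = card {i. i < n \<and> a i < 0} + card {i. i < n \<and> a i > 0}"
    by (rule card_Un_disjoint) auto
  finally show ?thesis by simp
qed

theorem lemma3p2:
  fixes n :: nat and a :: "nat \<Rightarrow> real"
  assumes "n \<ge> 2" and "Nneg n a \<ge> 2"
  shows "int (Zmon n 3 (Japply n 2 (Japply n 1 (lin_vec n a))))
           \<le> int ((n + 1) choose 3) - int n * int (Nneg n a) + int n + cfun n"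
proof -
  let ?T = "{M \<in> multisets_of_size {..<n} 3. sum_mset (image_mset a M) = 0}"
  let ?N = "card {i. i < n \<and> a i < 0}"
  let ?P = "card {i. i < n \<and> a i > 0}"
  let ?Z = "card {i. i < n \<and> a i = 0}"
  have z: "Zmon n 3 (Japply n 2 (Japply n 1 (lin_vec n a))) \<le> card ?T"
    unfolding Zmon_eq by (rule Zcount_le_T)
  obtain X where X: "card ?T \<le> ((?Z + 2) choose 3) + ?N * ?P + X"
    "2 * X \<le> ?N * ?P * max (?N - 1) (max (?P - 1) (2 * ?Z))"
    using count_T[of n a] by blast
  have NN: "Nneg n a = ?N" unfolding Nneg_def by simp
  have f: "int (card ?T) \<le> int ((n + 1) choose 3) - int n * int ?N + int n + cfun n"
    by (rule arith_final[OF _ _ X(2) X(1)]) (use assms NN card_partition[of n a] in auto)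
  show ?thesis using z f NN by simp
qed

end
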